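(* Let $\mathcal H=(\mathcal V,\mathcal E)$ be a (finite) higraph with path DGA $(\mathcal A,\delta)$, and let $D=\sum_{\varepsilon\in\mathcal E}\varepsilon\in\mathcal A$ be the sum of all paths of length $1$. Then $\delta D=D\,D$.
   Context: $\mathbb F=\{0,1\}$. A directed hypergraph $\mathcal H=(\mathcal V,\mathcal E)$ has edges $\varepsilon=(I,J)\in2^{\mathcal V}\times2^{\mathcal V}$, source $I$, target $J$. It is a higraph if for all edges $\varepsilon,\varepsilon'$: (Transitive) if $t(\varepsilon)\cap s(\varepsilon')\ne\emptyset$ then it equals $\{K\}$ for one vertex $K$, the unions $s(\varepsilon)\cup(s(\varepsilon')\setminus\{K\})$ and $(t(\varepsilon)\setminus\{K\})\cup t(\varepsilon')$ are disjoint unions and their pair is an edge; (Acyclic) if $t(\varepsilon)\cap s(\varepsilon')$ and $t(\varepsilon')\cap s(\varepsilon)$ are both non-empty then $\varepsilon=\varepsilon'=(\{K\},\{K\})$. $\mathcal V$ is finite. A path is a non-empty finite directed tree $T=(V,E)$ (nodes, arrows) with $\rho:V\to\mathcal E$ such that for each arrow $e$, $t(\rho(s(e)))\cap s(\rho(t(e)))$ is a single vertex $\rho(e)$, and distinct arrows with common source node or common target node have distinct $\rho(e)$; label-compatible tree isomorphisms identify paths. A single edge is a path of length $1$ (length = number of nodes). Source $s(\rho)=\bigcup_v(s(\rho(v))\setminus\{\rho(e):t(e)=v\})$, target $t(\rho)=\bigcup_v(t(\rho(v))\setminus\{\rho(e):s(e)=v\})$; a vertex of $s(\rho)$ in $s(\rho(v))$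 is sourced by $v$, of $t(\rho)$ in $t(\rho(v))$ targeted by $v$. Refinement $r((\rho,v),\rho'')$ for a node $v$ and a path $\rho''$ with the same source and target as $\rho(v)$: replace $v$ by the tree of $\rho''$, each arrow $(a,v)$ by $(a,v'')$ with $v''$ sourcing $\rho((a,v))$, each arrow $(v,b)$ by $(v'',b)$ with $v''$ targeting $\rho((v,b))$; $0$ otherwise. Path DGA: $\mathcal A$ the $\mathbb F$-vector space on paths, graded by length; product $\rho_1\rho_2$: if $t(\rho_1)\cap s(\rho_2)=\{K\}$, with $K$ targeted by node $v_1$ of $\rho_1$ and sourced by node $v_2$ of $\rho_2$, the path on the disjoint union of the trees plus the arrow $(v_1,v_2)$; $0$ if the intersection is empty; extended bilinearly. $\delta\rho=\sum_{v}\sum_{\rho''\text{ of length }2}r((\rho,v),\rho'')$, extended linearly. *)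

theory Defs
  imports Main "HOL-Library.Z2"
begin

text \<open>An edge is a pair (I, J) of vertex sets: source I = fst, target J = snd.
  The field F = {0,1} is the type bit from HOL-Library.Z2.\<close>

definition higraph :: "'v set \<Rightarrow> ('v set \<times> 'v set) set \<Rightarrow> bool" where
  "higraph V E \<longleftrightarrow>
     finite V \<and> E \<subseteq> Pow V \<times> Pow V \<and>
     (\<forall>\<epsilon>\<in>E. \<forall>\<epsilon>'\<in>E. snd \<epsilon> \<inter> fst \<epsilon>' \<noteq> {} \<longrightarrow>
        (\<exists>K. snd \<epsilon> \<inter> fst \<epsilon>' = {K}
             \<and> fst \<epsilon> \<inter> (fst \<epsilon>' - {K}) = {}
             \<and> (snd \<epsilon> - {K}) \<inter> snd \<epsilon>' = {}
             \<and> (fst \<epsilon> \<union> (fst \<epsilon>' - {K}), (snd \<epsilon> - {K}) \<union> snd \<epsilon>') \<in> E)) \<and>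
     (\<forall>\<epsilon>\<in>E. \<forall>\<epsilon>'\<in>E. snd \<epsilon> \<inter> fst \<epsilon>' \<noteq> {} \<and> snd \<epsilon>' \<inter> fst \<epsilon> \<noteq> {} \<longrightarrow>
        (\<exists>K. \<epsilon> = ({K}, {K}) \<and> \<epsilon>' = ({K}, {K})))"

record 'v rpath =
  nodes  :: "nat set"
  arrows :: "(nat \<times> nat) set"
  nlab   :: "nat \<Rightarrow> 'v set \<times> 'v set"
  alab   :: "nat \<times> nat \<Rightarrow> 'v"

definition is_tree :: "nat set \<Rightarrow> (nat \<times> nat) set \<Rightarrow> bool" where
  "is_tree N A \<longleftrightarrow> finite N \<and> N \<noteq> {} \<and> A \<subseteq> N \<times> N \<and> card A + 1 = card N \<and>
     (\<forall>a\<in>N. \<forall>b\<in>N. (a, b) \<in> (A \<union> A\<inverse>)\<^sup>*)"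

definition is_path :: "('v set \<times> 'v set) set \<Rightarrow> 'v rpath \<Rightarrow> bool" where
  "is_path E P \<longleftrightarrow> is_tree (nodes P) (arrows P) \<and> nlab P ` nodes P \<subseteq> E \<and>
     (\<forall>e\<in>arrows P. snd (nlab P (fst e)) \<inter> fst (nlab P (snd e)) = {alab P e}) \<and>
     (\<forall>e\<in>arrows P. \<forall>e'\<in>arrows P. e \<noteq> e' \<and> (fst e = fst e' \<or> snd e = snd e')
          \<longrightarrow> alab P e \<noteq> alab P e')"

definition piso :: "'v rpath \<Rightarrow> 'v rpath \<Rightarrow> bool" where
  "piso P Q \<longleftrightarrow> arrows P \<subseteq> nodes P \<times> nodes P \<and>
     (\<exists>f. bij_betw f (nodes P) (nodes Q) \<and> arrows Q = map_prod f f ` arrows P \<and>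
          (\<forall>a\<in>nodes P. nlab Q (f a) = nlab P a) \<and>
          (\<forall>e\<in>arrows P. alab Q (map_prod f f e) = alab P e))"

text \<open>Isomorphism class of a labelled tree; paths are such classes.\<close>
definition cls :: "'v rpath \<Rightarrow> 'v rpath set" where
  "cls P = {Q. piso P Q}"

definition rep :: "'v rpath set \<Rightarrow> 'v rpath" where
  "rep C = (SOME P. P \<in> C)"

definition len2_paths :: "('v set \<times> 'v set) set \<Rightarrow> 'v rpath set set" where
  "len2_paths E = {cls P | P. is_path E P \<and> card (nodes P) = 2}"

definition edge_path :: "'v set \<times> 'v set \<Rightarrow> 'v rpath" where
  "edge_path \<epsilon> = \<lparr>nodes = {0}, arrows = {}, nlab = (\<lambda>_. \<epsilon>), alab = (\<lambda>_. undefined)\<rparr>"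

definition sourced :: "'v rpath \<Rightarrow> nat \<Rightarrow> 'v \<Rightarrow> bool" where
  "sourced P u k \<longleftrightarrow> u \<in> nodes P \<and> k \<in> fst (nlab P u) \<and>
     (\<forall>e\<in>arrows P. snd e = u \<longrightarrow> alab P e \<noteq> k)"

definition targeted :: "'v rpath \<Rightarrow> nat \<Rightarrow> 'v \<Rightarrow> bool" where
  "targeted P u k \<longleftrightarrow> u \<in> nodes P \<and> k \<in> snd (nlab P u) \<and>
     (\<forall>e\<in>arrows P. fst e = u \<longrightarrow> alab P e \<noteq> k)"

definition psrc :: "'v rpath \<Rightarrow> 'v set" where
  "psrc P = {k. \<exists>u. sourced P u k}"

definition ptgt :: "'v rpath \<Rightarrow> 'v set" where
  "ptgt P = {k. \<exists>u. targeted P u k}"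

text \<open>Disjoint union of the trees, realised by the node renamings n -> 2n and n -> 2n+1.\<close>
definition glue :: "'v rpath \<Rightarrow> 'v rpath \<Rightarrow> 'v \<Rightarrow> 'v rpath" where
  "glue P1 P2 K =
    (let v1 = (THE u. targeted P1 u K); v2 = (THE u. sourced P2 u K);
         ev = (\<lambda>n::nat. 2 * n); od = (\<lambda>n::nat. 2 * n + 1) in
     \<lparr>nodes = ev ` nodes P1 \<union> od ` nodes P2,
      arrows = map_prod ev ev ` arrows P1 \<union> map_prod od od ` arrows P2 \<union> {(ev v1, od v2)},
      nlab = (\<lambda>n. if even n then nlab P1 (n div 2) else nlab P2 (n div 2)),
      alab = (\<lambda>(a, b). if even a \<and> even b then alab P1 (a div 2, b div 2)
                       else if odd a \<and> odd b then alab P2 (a div 2, b div 2)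
                       else K)\<rparr>)"

text \<open>Refinement r((P,v),Q): None stands for 0.\<close>
definition refine :: "'v rpath \<Rightarrow> nat \<Rightarrow> 'v rpath \<Rightarrow> 'v rpath option" where
  "refine P v Q =
    (if psrc Q = fst (nlab P v) \<and> ptgt Q = snd (nlab P v) then
      (let ev = (\<lambda>n::nat. 2 * n); od = (\<lambda>n::nat. 2 * n + 1);
           inn = (\<lambda>a. THE u. sourced Q u (alab P (a, v)));
           out = (\<lambda>b. THE u. targeted Q u (alab P (v, b))) in
       Some \<lparr>nodes = ev ` (nodes P - {v}) \<union> od ` nodes Q,
        arrows = map_prod ev ev ` {e \<in> arrows P. fst e \<noteq> v \<and> snd e \<noteq> v}
                 \<union> map_prod od od ` arrows Q
                 \<union> {(ev a, od (inn a)) | a. (a, v) \<in> arrows P}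
                 \<union> {(od (out b), ev b) | b. (v, b) \<in> arrows P},
        nlab = (\<lambda>n. if even n then nlab P (n div 2) else nlab Q (n div 2)),
        alab = (\<lambda>(a, b). if even a \<and> even b then alab P (a div 2, b div 2)
                         else if odd a \<and> odd b then alab Q (a div 2, b div 2)
                         else if even a then alab P (a div 2, v)
                         else alab P (v, b div 2))\<rparr>)
     else None)"

text \<open>An element of the path algebra is its coefficient function on path classes
  (finitely supported).\<close>
type_synonym 'v chain = "'v rpath set \<Rightarrow> bit"

definition basis :: "'v rpath set \<Rightarrow> 'v chain" where
  "basis C = (\<lambda>X. if X = C then 1 else 0)"

definition mult_basis :: "'v rpath set \<Rightarrow> 'v rpath set \<Rightarrow> 'v chain" where
  "mult_basis C1 C2 =
    (let P1 = rep C1; P2 = rep C2 in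
     if \<exists>K. ptgt P1 \<inter> psrc P2 = {K}
     then basis (cls (glue P1 P2 (THE K. ptgt P1 \<inter> psrc P2 = {K})))
     else (\<lambda>_. 0))"

definition pmult :: "'v chain \<Rightarrow> 'v chain \<Rightarrow> 'v chain" where
  "pmult a b = (\<lambda>X. \<Sum>C1\<in>{C. a C \<noteq> 0}. \<Sum>C2\<in>{C. b C \<noteq> 0}. a C1 * b C2 * mult_basis C1 C2 X)"

definition diff_basis :: "('v set \<times> 'v set) set \<Rightarrow> 'v rpath set \<Rightarrow> 'v chain" where
  "diff_basis E C = (\<lambda>X. \<Sum>v\<in>nodes (rep C). \<Sum>C''\<in>len2_paths E.
      (case refine (rep C) v (rep C'') of None \<Rightarrow> 0 | Some R \<Rightarrow> basis (cls R) X))"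

definition pdiff :: "('v set \<times> 'v set) set \<Rightarrow> 'v chain \<Rightarrow> 'v chain" where
  "pdiff E a = (\<lambda>X. \<Sum>C\<in>{C. a C \<noteq> 0}. a C * diff_basis E C X)"

definition Dsum :: "('v set \<times> 'v set) set \<Rightarrow> 'v chain" where
  "Dsum E = (\<lambda>X. \<Sum>\<epsilon>\<in>E. basis (cls (edge_path \<epsilon>)) X)"

end

theory Submission imports Defs begin

definition wf :: "'v rpath \<Rightarrow> bool" where
  "wf P \<longleftrightarrow> arrows P \<subseteq> nodes P \<times> nodes P"

lemma piso_wf: assumes "piso P Q" shows "wf P" "wf Q"
proof -
  from assms obtain f where A: "arrows P \<subseteq> nodes P \<times> nodes P"
    and b: "bij_betw f (nodes P) (nodes Q)" and ar: "arrows Q = map_prod f f ` arrows P"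
    unfolding piso_def by blast
  show "wf P" using A unfolding wf_def .
  show "wf Q" unfolding wf_def
  proof
    fix e assume "e \<in> arrows Q"
    then obtain a c where "(a,c) \<in> arrows P" "e = (f a, f c)" using ar by auto
    moreover have "a \<in> nodes P" "c \<in> nodes P" using A \<open>(a,c) \<in> arrows P\<close> by auto
    ultimately show "e \<in> nodes Q \<times> nodes Q" using b by (simp add: bij_betwE)
  qed
qed

lemma piso_refl: "wf P \<Longrightarrow> piso P P"
  unfolding piso_def wf_def by (rule conjI, simp, rule exI[of _ id]) (simp add: map_prod.id)

lemma piso_sym:
  assumes "piso P Q" shows "piso Q P"
proof -
  from assms obtain f where A: "arrows P \<subseteq> nodes P \<times> nodes P"
    and b: "bij_betw f (nodes P) (nodes Q)" and ar: "arrows Q = map_prod f f ` arrows P"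
    and nl: "\<forall>a\<in>nodes P. nlab Q (f a) = nlab P a"
    and al: "\<forall>e\<in>arrows P. alab Q (map_prod f f e) = alab P e" unfolding piso_def by blast
  define g where "g = inv_into (nodes P) f"
  have b': "bij_betw g (nodes Q) (nodes P)" using b bij_betw_inv_into g_def by blast
  have gf: "\<forall>x\<in>nodes P. g (f x) = x" using b g_def bij_betw_inv_into_left by fast
  have fg: "\<forall>y\<in>nodes Q. f (g y) = y" using b g_def bij_betw_inv_into_right by fast
  have AQ: "arrows Q \<subseteq> nodes Q \<times> nodes Q" using A ar b by (auto simp: bij_betw_def)
  have ga: "map_prod g g ` arrows Q = arrows P"
  proof -
    have "map_prod g g ` arrows Q = (map_prod g g \<circ> map_prod f f) ` arrows P" by (simp add: ar image_comp)
    also have "\<dots> = (\<lambda>e. e) ` arrows P"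
      by (rule image_cong[OF refl]) (use A gf in auto)
    finally show ?thesis by simp
  qed
  have nl': "\<forall>b\<in>nodes Q. nlab P (g b) = nlab Q b"
  proof
    fix c assume c: "c \<in> nodes Q"
    then have "g c \<in> nodes P" using b' by (meson bij_betwE)
    then have "nlab Q (f (g c)) = nlab P (g c)" using nl by blast
    then show "nlab P (g c) = nlab Q c" using fg c by simp
  qed
  have al': "\<forall>e\<in>arrows Q. alab P (map_prod g g e) = alab Q e"
  proof
    fix e assume "e \<in> arrows Q"
    then have "e \<in> map_prod f f ` arrows P" using ar by simp
    then obtain e0 where e0: "e0 \<in> arrows P" "e = map_prod f f e0" by (rule imageE) simp
    obtain x y where xy: "e0 = (x,y)" by (cases e0)
    have "x \<in> nodes P" "y \<in> nodes P" using A e0(1) xy by auto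
    then have "map_prod g g e = e0" using e0(2) xy gf by simp
    then show "alab P (map_prod g g e) = alab Q e" using al e0 by simp
  qed
  show ?thesis unfolding piso_def using AQ b' ga nl' al' by blast
qed

lemma piso_trans:
  assumes "piso P Q" "piso Q R" shows "piso P R"
proof -
  from assms(1) obtain f where A: "arrows P \<subseteq> nodes P \<times> nodes P"
    and b: "bij_betw f (nodes P) (nodes Q)" and ar: "arrows Q = map_prod f f ` arrows P"
    and nl: "\<forall>a\<in>nodes P. nlab Q (f a) = nlab P a"
    and al: "\<forall>e\<in>arrows P. alab Q (map_prod f f e) = alab P e" unfolding piso_def by blast
  from assms(2) obtain g where
    b2: "bij_betw g (nodes Q) (nodes R)" and ar2: "arrows R = map_prod g g ` arrows Q"
    and nl2: "\<forall>a\<in>nodes Q. nlab R (g a) = nlab Q a"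
    and al2: "\<forall>e\<in>arrows Q. alab R (map_prod g g e) = alab Q e" unfolding piso_def by blast
  have "bij_betw (g \<circ> f) (nodes P) (nodes R)" using b b2 bij_betw_trans by blast
  moreover have "arrows R = map_prod (g \<circ> f) (g \<circ> f) ` arrows P"
    using ar ar2 by (simp add: image_comp map_prod.comp)
  moreover have "\<forall>a\<in>nodes P. nlab R ((g \<circ> f) a) = nlab P a"
  proof
    fix a assume a: "a \<in> nodes P"
    then have "f a \<in> nodes Q" using b by (meson bij_betwE)
    then show "nlab R ((g \<circ> f) a) = nlab P a" using nl nl2 a by simp
  qed
  moreover have "\<forall>e\<in>arrows P. alab R (map_prod (g \<circ> f) (g \<circ> f) e) = alab P e"
  proof
    fix e assume e: "e \<in> arrows P"
    then have fe: "map_prod f f e \<in> arrows Q" using ar by simp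
    have "map_prod (g \<circ> f) (g \<circ> f) e = map_prod g g (map_prod f f e)" by (cases e) simp
    then show "alab R (map_prod (g \<circ> f) (g \<circ> f) e) = alab P e" using al2 fe al e by simp
  qed
  ultimately show ?thesis unfolding piso_def using A by blast
qed

lemma cls_eq: "piso P Q \<Longrightarrow> cls P = cls Q"
  unfolding cls_def using piso_sym piso_trans by blast

lemma in_cls: "wf P \<Longrightarrow> P \<in> cls P"
  unfolding cls_def using piso_refl by blast

lemma rep_cls: assumes "wf P" shows "piso P (rep (cls P))"
proof -
  have "rep (cls P) \<in> cls P" unfolding rep_def using in_cls[OF assms] by (rule someI)
  then show ?thesis unfolding cls_def by simp
qed

lemma cls_eq_iff: "wf P \<Longrightarrow> cls P = cls Q \<longleftrightarrow> piso P Q"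
  using cls_eq in_cls piso_wf unfolding cls_def
  by (metis mem_Collect_eq piso_sym)


definition mk :: "'v set \<times> 'v set \<Rightarrow> 'v set \<times> 'v set \<Rightarrow> 'v \<Rightarrow> 'v rpath" where
  "mk e1 e2 K = \<lparr>nodes = {0,1}, arrows = {(0,1)}, nlab = (\<lambda>n. if n = 0 then e1 else e2),
     alab = (\<lambda>_. K)\<rparr>"

lemma wf_mk: "wf (mk e1 e2 K)" unfolding wf_def mk_def by simp
lemma wf_edge: "wf (edge_path e)" unfolding wf_def edge_path_def by simp

lemma psrc_piso_sub: assumes "piso P Q" shows "psrc P \<subseteq> psrc Q"
proof
  from assms obtain f where A: "arrows P \<subseteq> nodes P \<times> nodes P"
    and b: "bij_betw f (nodes P) (nodes Q)" and ar: "arrows Q = map_prod f f ` arrows P"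
    and nl: "\<forall>a\<in>nodes P. nlab Q (f a) = nlab P a"
    and al: "\<forall>e\<in>arrows P. alab Q (map_prod f f e) = alab P e" unfolding piso_def by blast
  fix k assume "k \<in> psrc P"
  then obtain u where u: "sourced P u k" unfolding psrc_def by blast
  have "sourced Q (f u) k" unfolding sourced_def
  proof (intro conjI ballI impI)
    show "f u \<in> nodes Q" using u b unfolding sourced_def by (meson bij_betwE)
    show "k \<in> fst (nlab Q (f u))" using u nl unfolding sourced_def by simp
    fix e assume e: "e \<in> arrows Q" "snd e = f u"
    then have "e \<in> map_prod f f ` arrows P" using ar by simp
    then obtain e0 where e0: "e0 \<in> arrows P" "e = map_prod f f e0" by (rule imageE) simp
    have "snd e0 \<in> nodes P" using e0 A by auto
    moreover have "f (snd e0) = f u" using e e0 by (cases e0) simp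
    ultimately have "snd e0 = u" using u b unfolding sourced_def bij_betw_def inj_on_def by blast
    then have "alab P e0 \<noteq> k" using u e0 unfolding sourced_def by blast
    then show "alab Q e \<noteq> k" using al e0 by simp
  qed
  then show "k \<in> psrc Q" unfolding psrc_def by blast
qed

lemma ptgt_piso_sub: assumes "piso P Q" shows "ptgt P \<subseteq> ptgt Q"
proof
  from assms obtain f where A: "arrows P \<subseteq> nodes P \<times> nodes P"
    and b: "bij_betw f (nodes P) (nodes Q)" and ar: "arrows Q = map_prod f f ` arrows P"
    and nl: "\<forall>a\<in>nodes P. nlab Q (f a) = nlab P a"
    and al: "\<forall>e\<in>arrows P. alab Q (map_prod f f e) = alab P e" unfolding piso_def by blast
  fix k assume "k \<in> ptgt P"
  then obtain u where u: "targeted P u k" unfolding ptgt_def by blast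
  have "targeted Q (f u) k" unfolding targeted_def
  proof (intro conjI ballI impI)
    show "f u \<in> nodes Q" using u b unfolding targeted_def by (meson bij_betwE)
    show "k \<in> snd (nlab Q (f u))" using u nl unfolding targeted_def by simp
    fix e assume e: "e \<in> arrows Q" "fst e = f u"
    then have "e \<in> map_prod f f ` arrows P" using ar by simp
    then obtain e0 where e0: "e0 \<in> arrows P" "e = map_prod f f e0" by (rule imageE) simp
    have "fst e0 \<in> nodes P" using e0 A by auto
    moreover have "f (fst e0) = f u" using e e0 by (cases e0) simp
    ultimately have "fst e0 = u" using u b unfolding targeted_def bij_betw_def inj_on_def by blast
    then have "alab P e0 \<noteq> k" using u e0 unfolding targeted_def by blast
    then show "alab Q e \<noteq> k" using al e0 by simp
  qed
  then show "k \<in> ptgt Q" unfolding ptgt_def by blast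
qed

lemma psrc_piso: "piso P Q \<Longrightarrow> psrc P = psrc Q"
  using psrc_piso_sub piso_sym by blast
lemma ptgt_piso: "piso P Q \<Longrightarrow> ptgt P = ptgt Q"
  using ptgt_piso_sub piso_sym by blast

lemma mk_simps: "nodes (mk e1 e2 K) = {0,1}" "arrows (mk e1 e2 K) = {(0,1)}"
  "nlab (mk e1 e2 K) n = (if n = 0 then e1 else e2)" "alab (mk e1 e2 K) x = K"
  unfolding mk_def by simp_all
lemma edge_simps: "nodes (edge_path e) = {0}" "arrows (edge_path e) = {}"
  "nlab (edge_path e) n = e"
  unfolding edge_path_def by simp_all

lemma psrc_mk: "psrc (mk e1 e2 K) = fst e1 \<union> (fst e2 - {K})"
proof -
  have "sourced (mk e1 e2 K) u k \<longleftrightarrow> (u = 0 \<and> k \<in> fst e1) \<or> (u = 1 \<and> k \<in> fst e2 \<and> k \<noteq> K)" for u k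
    unfolding sourced_def mk_simps by auto
  then show ?thesis unfolding psrc_def by auto
qed
lemma ptgt_mk: "ptgt (mk e1 e2 K) = (snd e1 - {K}) \<union> snd e2"
proof -
  have "targeted (mk e1 e2 K) u k \<longleftrightarrow> (u = 0 \<and> k \<in> snd e1 \<and> k \<noteq> K) \<or> (u = 1 \<and> k \<in> snd e2)" for u k
    unfolding targeted_def mk_simps by auto
  then show ?thesis unfolding ptgt_def by auto
qed
lemma psrc_edge: "psrc (edge_path e) = fst e"
  unfolding psrc_def sourced_def edge_simps by auto
lemma ptgt_edge: "ptgt (edge_path e) = snd e"
  unfolding ptgt_def targeted_def edge_simps by auto

lemma rep_ep:
  obtains n where "nodes (rep (cls (edge_path e))) = {n}" "arrows (rep (cls (edge_path e))) = {}"
    "nlab (rep (cls (edge_path e))) n = e"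
    "psrc (rep (cls (edge_path e))) = fst e" "ptgt (rep (cls (edge_path e))) = snd e"
proof -
  let ?R = "rep (cls (edge_path e))"
  have p: "piso (edge_path e) ?R" using rep_cls wf_edge by blast
  then obtain f :: "nat \<Rightarrow> nat" where b: "bij_betw f {0} (nodes ?R)" and ar: "arrows ?R = map_prod f f ` {}"
    and nl: "nlab ?R (f 0) = e"
    unfolding piso_def edge_simps by blast
  have "nodes ?R = {f 0}" using b unfolding bij_betw_def by auto
  then show ?thesis
    by (rule that[of "f 0"]) (use ar nl psrc_piso[OF p] ptgt_piso[OF p] psrc_edge[of e] ptgt_edge[of e] in auto)
qed

lemma ep_inj: "inj (\<lambda>e. cls (edge_path e))"
proof
  fix a b :: "'v set \<times> 'v set"
  assume "cls (edge_path a) = cls (edge_path b)"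
  then have "piso (edge_path a) (edge_path b)" using cls_eq_iff wf_edge by blast
  then obtain f :: "nat \<Rightarrow> nat" where "\<forall>x\<in>{0}. nlab (edge_path b) (f x) = nlab (edge_path a) x"
    unfolding piso_def edge_simps by blast
  then show "a = b" unfolding edge_simps by simp
qed

lemma mk_inj: assumes "cls (mk a b K) = cls (mk a' b' K')" shows "a = a'" "b = b'"
proof -
  have p: "piso (mk a b K) (mk a' b' K')" using cls_eq_iff[OF wf_mk, THEN iffD1, OF assms] .
  then obtain f :: "nat \<Rightarrow> nat" where ar: "arrows (mk a' b' K') = map_prod f f ` arrows (mk a b K)"
    and nl: "\<forall>x\<in>nodes (mk a b K). nlab (mk a' b' K') (f x) = nlab (mk a b K) x"
    unfolding piso_def by blast
  have "{(0::nat,1::nat)} = {(f 0, f 1)}" using ar by (simp add: mk_simps)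
  then have f01: "f 0 = 0" "f 1 = 1" by simp_all
  have "nlab (mk a' b' K') (f 0) = nlab (mk a b K) 0" "nlab (mk a' b' K') (f 1) = nlab (mk a b K) 1"
    using nl by (simp_all add: mk_simps)
  then show "a = a'" "b = b'" using f01 by (simp_all add: mk_simps)
qed

lemma glue_piso:
  assumes n1: "nodes P1 = {n1}" "arrows P1 = {}" "nlab P1 n1 = e1"
    and n2: "nodes P2 = {n2}" "arrows P2 = {}" "nlab P2 n2 = e2"
    and K: "K \<in> snd e1" "K \<in> fst e2"
  shows "piso (glue P1 P2 K) (mk e1 e2 K)"
proof -
  have t1: "(THE u. targeted P1 u K) = n1"
    by (rule the_equality) (use n1 K in \<open>auto simp: targeted_def\<close>)
  have t2: "(THE u. sourced P2 u K) = n2"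
    by (rule the_equality) (use n2 K in \<open>auto simp: sourced_def\<close>)
  have gn: "nodes (glue P1 P2 K) = {2*n1, 2*n2+1}" and ga: "arrows (glue P1 P2 K) = {(2*n1, 2*n2+1)}"
    and gl: "nlab (glue P1 P2 K) = (\<lambda>n. if even n then nlab P1 (n div 2) else nlab P2 (n div 2))"
    and gal: "alab (glue P1 P2 K) (2*n1, 2*n2+1) = K"
    unfolding glue_def Let_def t1 t2 using n1 n2 by (simp_all add: insert_commute)
  define f where "f = (\<lambda>x::nat. if even x then 0::nat else 1)"
  have "bij_betw f {2*n1, 2*n2+1} {0,1}"
    unfolding bij_betw_def inj_on_def f_def by auto
  moreover have "{(0::nat,1::nat)} = map_prod f f ` {(2*n1, 2*n2+1)}" unfolding f_def by simp
  moreover have "\<forall>a\<in>{2*n1, 2*n2+1}. nlab (mk e1 e2 K) (f a) = nlab (glue P1 P2 K) a"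
  proof -
    have "nlab (glue P1 P2 K) (2*n1) = e1" using n1 gl by simp
    moreover have "nlab (glue P1 P2 K) (2*n2+1) = e2" using n2 gl by simp
    moreover have "f (2*n1) = 0" "f (2*n2+1) = 1" unfolding f_def by simp_all
    ultimately show ?thesis by (simp add: mk_simps)
  qed
  moreover have "\<forall>e\<in>{(2*n1, 2*n2+1)}. alab (mk e1 e2 K) (map_prod f f e) = alab (glue P1 P2 K) e"
    unfolding mk_simps using gal by simp
  ultimately show ?thesis unfolding piso_def gn ga mk_simps by blast
qed

lemma mk_path:
  assumes "e1 \<in> E" "e2 \<in> E" "snd e1 \<inter> fst e2 = {K}"
  shows "is_path E (mk e1 e2 K)" "card (nodes (mk e1 e2 K)) = 2"
proof -
  let ?A = "{(0::nat,1::nat)}"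
  have c: "\<forall>a\<in>{0::nat,1}. \<forall>b\<in>{0,1}. (a, b) \<in> (?A \<union> ?A\<inverse>)\<^sup>*"
  proof (intro ballI)
    fix a b :: nat assume "a \<in> {0,1}" "b \<in> {0,1}"
    then show "(a, b) \<in> (?A \<union> ?A\<inverse>)\<^sup>*" by (auto intro: r_into_rtrancl)
  qed
  have "is_tree {0,1} ?A" unfolding is_tree_def using c by simp
  then show "is_path E (mk e1 e2 K)" unfolding is_path_def mk_simps using assms by auto
  show "card (nodes (mk e1 e2 K)) = 2" unfolding mk_simps by simp
qed

lemma loop_reach: assumes "(a, b) \<in> ({(c,c)} \<union> {(c,c)}\<inverse>)\<^sup>*" "a = c" shows "b = c"
  using assms(1,2) by (induction rule: rtrancl_induct) auto

lemma len2_char: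
  assumes "is_path E P" "card (nodes P) = 2"
  shows "\<exists>e1 e2 K. e1 \<in> E \<and> e2 \<in> E \<and> snd e1 \<inter> fst e2 = {K} \<and> piso P (mk e1 e2 K)"
proof -
  have tr: "is_tree (nodes P) (arrows P)" using assms unfolding is_path_def by blast
  have fin: "finite (nodes P)" using tr unfolding is_tree_def by blast
  obtain a b where ab: "nodes P = {a,b}" "a \<noteq> b" using card_2_iff[THEN iffD1, OF assms(2)] by blast
  have "card (arrows P) + 1 = card (nodes P)" using tr unfolding is_tree_def by blast
  then have "card (arrows P) = 1" using assms(2) by simp
  then obtain x where x: "arrows P = {x}" using card_1_singletonE by blast
  have sub: "arrows P \<subseteq> nodes P \<times> nodes P" using tr unfolding is_tree_def by blast
  have xin: "x \<in> {a,b} \<times> {a,b}" using sub x ab by simp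
  have allc: "\<forall>u\<in>nodes P. \<forall>v\<in>nodes P. (u, v) \<in> (arrows P \<union> (arrows P)\<inverse>)\<^sup>*"
    using tr unfolding is_tree_def by blast
  have conn: "(a, b) \<in> (arrows P \<union> (arrows P)\<inverse>)\<^sup>*" "(b, a) \<in> (arrows P \<union> (arrows P)\<inverse>)\<^sup>*"
    using allc ab(1) by simp_all
  obtain c d where cd: "nodes P = {c,d}" "c \<noteq> d" "arrows P = {(c,d)}"
  proof -
    have "x = (a,a) \<or> x = (b,b) \<or> x = (a,b) \<or> x = (b,a)" using xin by blast
    moreover have "x \<noteq> (a,a)"
    proof
      assume "x = (a,a)"
      then have "(a, b) \<in> ({(a,a)} \<union> {(a,a)}\<inverse>)\<^sup>*" using conn(1) x by simp
      then have "b = a" by (rule loop_reach[OF _ refl])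
      then show False using ab(2) by simp
    qed
    moreover have "x \<noteq> (b,b)"
    proof
      assume "x = (b,b)"
      then have "(b, a) \<in> ({(b,b)} \<union> {(b,b)}\<inverse>)\<^sup>*" using conn(2) x by simp
      then have "a = b" by (rule loop_reach[OF _ refl])
      then show False using ab(2) by simp
    qed
    ultimately have "x = (a,b) \<or> x = (b,a)" by blast
    then show ?thesis
    proof
      assume "x = (a,b)" then show ?thesis using that[of a b] ab x by simp
    next
      assume "x = (b,a)" then show ?thesis using that[of b a] ab x by (simp add: insert_commute)
    qed
  qed
  have lab0: "\<forall>e\<in>arrows P. snd (nlab P (fst e)) \<inter> fst (nlab P (snd e)) = {alab P e}"
    and labE: "nlab P ` nodes P \<subseteq> E"
    using assms(1) unfolding is_path_def by blast+
  have lab: "snd (nlab P c) \<inter> fst (nlab P d) = {alab P (c,d)}" "nlab P c \<in> E" "nlab P d \<in> E"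
    using lab0 cd(3) apply simp
    using labE cd(1) by blast+
  define f where "f = (\<lambda>x. if x = c then 0::nat else 1)"
  have "bij_betw f {c,d} {0,1}" unfolding bij_betw_def inj_on_def f_def using cd by auto
  moreover have "{(0::nat,1::nat)} = map_prod f f ` {(c,d)}" unfolding f_def using cd by simp
  moreover have "\<forall>u\<in>{c,d}. nlab (mk (nlab P c) (nlab P d) (alab P (c,d))) (f u) = nlab P u"
    unfolding mk_simps f_def using cd by auto
  moreover have "\<forall>e\<in>{(c,d)}. alab (mk (nlab P c) (nlab P d) (alab P (c,d))) (map_prod f f e) = alab P e"
    unfolding mk_simps by simp
  ultimately have "piso P (mk (nlab P c) (nlab P d) (alab P (c,d)))"
    unfolding piso_def cd mk_simps by blast
  then show ?thesis using lab by blast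
qed

lemma refine_single:
  assumes "nodes P = {n}" "arrows P = {}" "wf Q"
  shows "refine P n Q = None \<longleftrightarrow> \<not> (psrc Q = fst (nlab P n) \<and> ptgt Q = snd (nlab P n))"
    and "refine P n Q = Some R \<Longrightarrow> piso Q R"
proof -
  show "refine P n Q = None \<longleftrightarrow> \<not> (psrc Q = fst (nlab P n) \<and> ptgt Q = snd (nlab P n))"
    unfolding refine_def Let_def by simp
  assume "refine P n Q = Some R"
  then have Rn: "nodes R = (\<lambda>x. 2*x+1) ` nodes Q" and Ra: "arrows R = map_prod (\<lambda>x. 2*x+1) (\<lambda>x. 2*x+1) ` arrows Q"
    and Rl: "nlab R = (\<lambda>m. if even m then nlab P (m div 2) else nlab Q (m div 2))"
    and Ral: "alab R = (\<lambda>(a, b). if even a \<and> even b then alab P (a div 2, b div 2)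
                         else if odd a \<and> odd b then alab Q (a div 2, b div 2)
                         else if even a then alab P (a div 2, n)
                         else alab P (n, b div 2))"
    unfolding refine_def Let_def using assms by (auto split: if_splits)
  have "bij_betw (\<lambda>x::nat. 2*x+1) (nodes Q) (nodes R)" unfolding Rn bij_betw_def inj_on_def by simp
  moreover have "\<forall>a\<in>nodes Q. nlab R (2*a+1) = nlab Q a" unfolding Rl by simp
  moreover have "\<forall>e\<in>arrows Q. alab R (map_prod (\<lambda>x. 2*x+1) (\<lambda>x. 2*x+1) e) = alab Q e"
    unfolding Ral by auto
  ultimately show "piso Q R" unfolding piso_def using assms(3) Ra unfolding wf_def by blast
qed


definition Gset :: "('v set \<times> 'v set) set \<Rightarrow> (('v set \<times> 'v set) \<times> ('v set \<times> 'v set)) set" where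
  "Gset E = {p \<in> E \<times> E. \<exists>K. snd (fst p) \<inter> fst (snd p) = {K}}"
definition kk :: "('v set \<times> 'v set) \<times> ('v set \<times> 'v set) \<Rightarrow> 'v" where
  "kk p = (THE K. snd (fst p) \<inter> fst (snd p) = {K})"
definition mm :: "('v set \<times> 'v set) \<times> ('v set \<times> 'v set) \<Rightarrow> 'v rpath set" where
  "mm p = cls (mk (fst p) (snd p) (kk p))"

lemma the_single: "A = {K} \<Longrightarrow> (THE K. A = {K}) = K"
  by (rule the_equality) auto

lemma kk_eq: "snd e1 \<inter> fst e2 = {K} \<Longrightarrow> kk (e1, e2) = K"
  unfolding kk_def using the_single by simp

lemma Gset_elim: assumes "p \<in> Gset E"
  obtains e1 e2 K where "p = (e1, e2)" "e1 \<in> E" "e2 \<in> E" "snd e1 \<inter> fst e2 = {K}"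
proof -
  obtain e1 e2 where p: "p = (e1, e2)" by (cases p)
  from assms have "e1 \<in> E" "e2 \<in> E" "\<exists>K. snd e1 \<inter> fst e2 = {K}" unfolding Gset_def p by simp_all
  then show ?thesis using that p by blast
qed

lemma L_eq: "len2_paths E = mm ` Gset E"
proof
  show "len2_paths E \<subseteq> mm ` Gset E"
  proof
    fix X assume "X \<in> len2_paths E"
    then obtain P where P: "X = cls P" "is_path E P" "card (nodes P) = 2"
      unfolding len2_paths_def by blast
    obtain e1 e2 K where e: "e1 \<in> E" "e2 \<in> E" "snd e1 \<inter> fst e2 = {K}" "piso P (mk e1 e2 K)"
      using len2_char[OF P(2,3)] by blast
    have kk: "kk (e1, e2) = K" by (rule kk_eq[OF e(3)])
    have "cls P = cls (mk e1 e2 K)" by (rule cls_eq[OF e(4)])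
    then have "X = mm (e1, e2)" by (simp add: mm_def P(1) kk)
    moreover have "(e1, e2) \<in> Gset E" unfolding Gset_def using e(1,2,3) by simp
    ultimately show "X \<in> mm ` Gset E" by (rule image_eqI)
  qed
  show "mm ` Gset E \<subseteq> len2_paths E"
  proof
    fix X assume "X \<in> mm ` Gset E"
    then obtain p where p: "p \<in> Gset E" "X = mm p" by (rule imageE) simp
    obtain e1 e2 K where e: "p = (e1, e2)" "e1 \<in> E" "e2 \<in> E" "snd e1 \<inter> fst e2 = {K}"
      using Gset_elim[OF p(1)] by blast
    have "X = cls (mk e1 e2 K)" unfolding p(2) e(1) mm_def using kk_eq[OF e(4)] by simp
    then show "X \<in> len2_paths E" unfolding len2_paths_def using mk_path[OF e(2-4)] by blast
  qed
qed

lemma mm_inj: "inj_on mm (Gset E)"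
proof
  fix p q assume "p \<in> Gset E" "q \<in> Gset E" "mm p = mm q"
  then have c: "cls (mk (fst p) (snd p) (kk p)) = cls (mk (fst q) (snd q) (kk q))" unfolding mm_def by simp
  have "fst p = fst q" "snd p = snd q" using mk_inj[OF c] by simp_all
  then show "p = q" by (simp add: prod_eq_iff)
qed

lemma L_fin: "finite E \<Longrightarrow> finite (len2_paths E)"
  unfolding L_eq Gset_def by simp

lemma L_rep: assumes "X \<in> len2_paths E" shows "wf (rep X)" "cls (rep X) = X"
proof -
  obtain P where P: "X = cls P" "is_path E P"
    using assms unfolding len2_paths_def by blast
  have "wf P" using P(2) unfolding is_path_def is_tree_def wf_def by blast
  then have p: "piso P (rep X)" unfolding P(1) by (rule rep_cls)
  then show "wf (rep X)" by (rule piso_wf(2))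
  show "cls (rep X) = X" using cls_eq[OF p] P(1) by simp
qed

lemma L_src: assumes h: "higraph V E" and X: "X \<in> len2_paths E"
  shows "(psrc (rep X), ptgt (rep X)) \<in> E"
proof -
  from X obtain p where p0: "p \<in> Gset E" "X = mm p" unfolding L_eq by (rule imageE) simp
  obtain e1 e2 K where e: "p = (e1, e2)" "e1 \<in> E" "e2 \<in> E" "snd e1 \<inter> fst e2 = {K}"
    using Gset_elim[OF p0(1)] by blast
  have Xc: "X = cls (mk e1 e2 K)" unfolding p0(2) e(1) mm_def using kk_eq[OF e(4)] by simp
  have p: "piso (mk e1 e2 K) (rep X)" unfolding Xc by (rule rep_cls[OF wf_mk])
  have s: "psrc (rep X) = fst e1 \<union> (fst e2 - {K})" "ptgt (rep X) = (snd e1 - {K}) \<union> snd e2"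
    using psrc_piso[OF p, symmetric] ptgt_piso[OF p, symmetric] psrc_mk[of e1 e2 K] ptgt_mk[of e1 e2 K]
    by simp_all
  have tr: "\<forall>\<epsilon>\<in>E. \<forall>\<epsilon>'\<in>E. snd \<epsilon> \<inter> fst \<epsilon>' \<noteq> {} \<longrightarrow>
        (\<exists>K. snd \<epsilon> \<inter> fst \<epsilon>' = {K}
             \<and> fst \<epsilon> \<inter> (fst \<epsilon>' - {K}) = {}
             \<and> (snd \<epsilon> - {K}) \<inter> snd \<epsilon>' = {}
             \<and> (fst \<epsilon> \<union> (fst \<epsilon>' - {K}), (snd \<epsilon> - {K}) \<union> snd \<epsilon>') \<in> E)"
    using h unfolding higraph_def by (elim conjE) assumption
  have ne: "snd e1 \<inter> fst e2 \<noteq> {}" using e(4) by simp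
  obtain K' where K': "snd e1 \<inter> fst e2 = {K'}"
    "(fst e1 \<union> (fst e2 - {K'}), (snd e1 - {K'}) \<union> snd e2) \<in> E"
    using tr[rule_format, OF e(2) e(3) ne] by blast
  have "K' = K" using K'(1) e(4) by simp
  then show ?thesis using s K'(2) by simp
qed

lemma mb: "mult_basis (cls (edge_path e1)) (cls (edge_path e2)) =
   (if \<exists>K. snd e1 \<inter> fst e2 = {K} then basis (mm (e1,e2)) else (\<lambda>_. 0))"
proof -
  obtain n1 where n1: "nodes (rep (cls (edge_path e1))) = {n1}" "arrows (rep (cls (edge_path e1))) = {}"
    "nlab (rep (cls (edge_path e1))) n1 = e1" "psrc (rep (cls (edge_path e1))) = fst e1"
    "ptgt (rep (cls (edge_path e1))) = snd e1"
    by (rule rep_ep)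
  obtain n2 where n2: "nodes (rep (cls (edge_path e2))) = {n2}" "arrows (rep (cls (edge_path e2))) = {}"
    "nlab (rep (cls (edge_path e2))) n2 = e2" "psrc (rep (cls (edge_path e2))) = fst e2"
    "ptgt (rep (cls (edge_path e2))) = snd e2"
    by (rule rep_ep)
  show ?thesis
  proof (cases "\<exists>K. snd e1 \<inter> fst e2 = {K}")
    case True
    then obtain K where K: "snd e1 \<inter> fst e2 = {K}" by blast
    have "piso (glue (rep (cls (edge_path e1))) (rep (cls (edge_path e2))) K) (mk e1 e2 K)"
      by (rule glue_piso[OF n1(1-3) n2(1-3)]) (use K in auto)
    then have "cls (glue (rep (cls (edge_path e1))) (rep (cls (edge_path e2))) K) = mm (e1, e2)"
      unfolding mm_def using kk_eq[OF K] by (simp add: cls_eq)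
    then show ?thesis unfolding mult_basis_def Let_def n1(5) n2(4) using K the_single[OF K] by simp
  next
    case False
    then show ?thesis unfolding mult_basis_def Let_def n1(5) n2(4) by simp
  qed
qed

lemma db: assumes "finite E"
  shows "diff_basis E (cls (edge_path e)) X =
    (if X \<in> len2_paths E \<and> psrc (rep X) = fst e \<and> ptgt (rep X) = snd e then 1 else 0)"
proof -
  let ?P = "rep (cls (edge_path e))"
  obtain n where n: "nodes ?P = {n}" "arrows ?P = {}" "nlab ?P n = e" "psrc ?P = fst e" "ptgt ?P = snd e"
    by (rule rep_ep)
  have "diff_basis E (cls (edge_path e)) X = (\<Sum>C\<in>len2_paths E.
      (case refine ?P n (rep C) of None \<Rightarrow> 0 | Some R \<Rightarrow> basis (cls R) X))"
    unfolding diff_basis_def n by simp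
  also have "\<dots> = (\<Sum>C\<in>len2_paths E. if X = C then
      (if psrc (rep C) = fst e \<and> ptgt (rep C) = snd e then 1 else 0) else 0)"
  proof (rule sum.cong[OF refl])
    fix C assume C: "C \<in> len2_paths E"
    note w = L_rep[OF C]
    show "(case refine ?P n (rep C) of None \<Rightarrow> 0 | Some R \<Rightarrow> basis (cls R) X) =
      (if X = C then (if psrc (rep C) = fst e \<and> ptgt (rep C) = snd e then 1 else 0) else 0)"
    proof (cases "refine ?P n (rep C)")
      case None
      then show ?thesis using refine_single(1)[OF n(1,2) w(1)] n(3) by auto
    next
      case (Some R)
      have c: "psrc (rep C) = fst e \<and> ptgt (rep C) = snd e"
        using refine_single(1)[OF n(1,2) w(1)] n(3) Some by simp
      have "cls (rep C) = cls R" by (rule cls_eq[OF refine_single(2)[OF n(1,2) w(1) Some]])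
      then have "cls R = C" using w(2) by simp
      then show ?thesis using Some c unfolding basis_def by simp
    qed
  qed
  also have "\<dots> = (if X \<in> len2_paths E \<and> psrc (rep X) = fst e \<and> ptgt (rep X) = snd e then 1 else 0)"
    using L_fin[OF assms] by (simp add: sum.delta')
  finally show ?thesis .
qed

theorem proposition2p17:
  fixes V :: "'v set" and E :: "('v set \<times> 'v set) set"
  assumes "higraph V E"
  shows "pdiff E (Dsum E) = pmult (Dsum E) (Dsum E)"
proof
  fix X
  let ?ep = "\<lambda>e. cls (edge_path e)"
  let ?L = "len2_paths E"
  have finE: "finite E" using assms unfolding higraph_def by (meson finite_Pow_iff finite_SigmaI finite_subset)
  have injE: "inj_on ?ep E" using ep_inj by (rule inj_on_subset) simp
  have Dv: "Dsum E C = (if C \<in> ?ep ` E then 1 else 0)" for C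
  proof -
    have "Dsum E C = (\<Sum>e\<in>E. basis (?ep e) C)" unfolding Dsum_def by simp
    also have "\<dots> = (\<Sum>Y\<in>?ep ` E. basis Y C)" by (simp add: sum.reindex[OF injE] comp_def)
    also have "\<dots> = (if C \<in> ?ep ` E then 1 else 0)" unfolding basis_def using finE by (simp add: sum.delta)
    finally show ?thesis .
  qed
  have supp: "{C. Dsum E C \<noteq> 0} = ?ep ` E" using Dv by auto
  have lhs: "pdiff E (Dsum E) X = (if X \<in> ?L then 1 else 0)"
  proof -
    have "pdiff E (Dsum E) X = (\<Sum>C\<in>?ep ` E. diff_basis E C X)"
      unfolding pdiff_def supp by (rule sum.cong) (auto simp: Dv)
    also have "\<dots> = (\<Sum>e\<in>E. diff_basis E (?ep e) X)" by (simp add: sum.reindex[OF injE] comp_def)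
    also have "\<dots> = (\<Sum>e\<in>E. if e = (psrc (rep X), ptgt (rep X)) then (if X \<in> ?L then 1 else 0) else 0)"
      by (rule sum.cong[OF refl]) (auto simp: db[OF finE])
    also have "\<dots> = (if X \<in> ?L then 1 else 0)"
      using finE L_src[OF assms] by (simp add: sum.delta)
    finally show ?thesis .
  qed
  have rhs: "pmult (Dsum E) (Dsum E) X = (if X \<in> ?L then 1 else 0)"
  proof -
    have "pmult (Dsum E) (Dsum E) X = (\<Sum>C1\<in>?ep ` E. \<Sum>C2\<in>?ep ` E. mult_basis C1 C2 X)"
      unfolding pmult_def supp by (intro sum.cong refl) (auto simp: Dv)
    also have "\<dots> = (\<Sum>e1\<in>E. \<Sum>e2\<in>E. mult_basis (?ep e1) (?ep e2) X)"
      by (simp add: sum.reindex[OF injE] comp_def)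
    also have "\<dots> = (\<Sum>e1\<in>E. \<Sum>e2\<in>E. if (e1, e2) \<in> Gset E then basis (mm (e1,e2)) X else 0)"
      by (intro sum.cong refl) (auto simp: mb Gset_def)
    also have "\<dots> = (\<Sum>p\<in>E \<times> E. if p \<in> Gset E then basis (mm p) X else 0)"
      by (simp add: sum.cartesian_product)
    also have "\<dots> = (\<Sum>p\<in>Gset E. basis (mm p) X)"
    proof -
      have "Gset E = {p \<in> E \<times> E. p \<in> Gset E}" unfolding Gset_def by auto
      then show ?thesis using sum.inter_filter[of "E \<times> E" "\<lambda>p. basis (mm p) X" "\<lambda>p. p \<in> Gset E"] finE
        by simp
    qed
    also have "\<dots> = (\<Sum>Y\<in>mm ` Gset E. basis Y X)" by (simp add: sum.reindex[OF mm_inj] comp_def)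
    also have "\<dots> = (if X \<in> ?L then 1 else 0)"
      unfolding basis_def L_eq using finE by (simp add: sum.delta' Gset_def)
    finally show ?thesis .
  qed
  show "pdiff E (Dsum E) X = pmult (Dsum E) (Dsum E) X" using lhs rhs by simp
qed

end
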